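(* Fix stress levels $x_1<x_2$, a stress-change time $\tau>0$, and inspection times $0=t_0<t_1<\cdots<t_L$ with $t_k=\tau$ for some $1\le k<L$. Let $\theta=(\gamma_0,\gamma_1,a_1)\in\Theta=(0,\infty)^3$, and let $s=s(\theta)=u-\tau$, where $u$ is the unique positive root of $\frac{\gamma_1}{2}u^2+\gamma_0u-e^{a_1(x_1-x_2)}\left(\gamma_0\tau+\gamma_1\frac{\tau^2}{2}\right)=0$. Define $$R_\theta(t,x_1)=\exp\!\Big(-e^{a_1x_1}\big(\gamma_0t+\gamma_1\tfrac{t^2}{2}\big)\Big),\qquad R_\theta(t,x_2)=\exp\!\Big(-e^{a_1x_2}\big(\gamma_0(t+s)+\gamma_1\tfrac{(t+s)^2}{2}\big)\Big),$$ and the step-stress reliability $R_\theta(t)=R_\theta(t,x_1)$ for $0\le t\le\tau$, $R_\theta(t)=R_\theta(t,x_2)$ for $t\ge\tau$. Let $\pi_j(\theta)=R_\theta(t_{j-1})-R_\theta(t_j)$ for $j=1,\dots,L$, $\pi_{L+1}(\theta)=R_\theta(t_L)$, $\pi(\theta)=(\pi_1(\theta),\dots,\pi_{L+1}(\theta))^T$. Given observed counts $(n_1,\dots,n_{L+1})$ with $N=\sum_j n_j$ and $\widehat p=(n_1/N,\dots,n_{L+1}/N)^T$, and $\beta\ge0$, let $\widehat\theta_\beta$ be a minimum density power divergence estimator, i.e. a minimizer over $\Theta$ of $d_\beta(\widehat p,\pi(\theta))$, where for $\beta>0$ $$d_\beta(\widehat p,\pi(\theta))=\sum_{j=1}^{L+1}\Big[\pi_j(\theta)^{\beta+1}-\big(1+\tfrac1\beta\big)\pi_j(\theta)^\beta\widehat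 p_j+\tfrac1\beta\widehat p_j^{\beta+1}\Big]$$ and for $\beta=0$, $d_0(\widehat p,\pi(\theta))=\sum_{j}\widehat p_j\log(\widehat p_j/\pi_j(\theta))$. Then $\widehat\theta_\beta$ satisfies $U_\beta(\widehat\theta_\beta)=0\in\mathbb{R}^3$, where $$U_\beta(\theta)=W(\theta)^TD(\theta)^{\beta-1}\big(\widehat p-\pi(\theta)\big),$$ $D(\theta)=\mathrm{diag}(\pi_1(\theta),\dots,\pi_{L+1}(\theta))$, and $W(\theta)$ is the $(L+1)\times3$ Jacobian matrix of $\pi(\theta)$ whose $j$-th row is $w_j^T$ with $w_j=\frac{\partial R_\theta(t_{j-1},x_1)}{\partial\theta}-\frac{\partial R_\theta(t_j,x_1)}{\partial\theta}$ if $t_{j-1}<\tau$, $w_j=\frac{\partial R_\theta(t_{j-1},x_2)}{\partial\theta}-\frac{\partial R_\theta(t_j,x_2)}{\partial\theta}$ if $\tau\le t_{j-1}$ and $j\le L$, and $w_{L+1}=\frac{\partial R_\theta(t_L,x_2)}{\partial\theta}$. Here, with $k_1(t)=\gamma_1t+\gamma_0$ and $k_2(t)=\frac{\gamma_1}{2}t+\gamma_0$, the gradients are $$\frac{\partial R_\theta(t,x_1)}{\partial\gamma_0}=-R_\theta(t,x_1)e^{a_1x_1}t,\quad \frac{\partial R_\theta(t,x_1)}{\partial\gamma_1}=-R_\theta(t,x_1)e^{a_1x_1}\frac{t^2}{2},\quad \frac{\partial R_\theta(t,x_1)}{\partial a_1}=-R_\theta(t,x_1)e^{a_1x_1}t\,k_2(t)\,x_1,$$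 $$\frac{\partial R_\theta(t,x_2)}{\partial\gamma_0}=-R_\theta(t,x_2)e^{a_1x_2}\Big((t+s)+\frac{\gamma_1}{2}\frac{(\tau+s)s}{k_2(\tau)}\frac{k_1(t+s)}{k_1(\tau+s)}\Big),$$ $$\frac{\partial R_\theta(t,x_2)}{\partial\gamma_1}=-R_\theta(t,x_2)e^{a_1x_2}\Big(\frac{(t+s)^2}{2}-\frac{\gamma_0}{2}\frac{(\tau+s)s}{k_2(\tau)}\frac{k_1(t+s)}{k_1(\tau+s)}\Big),$$ $$\frac{\partial R_\theta(t,x_2)}{\partial a_1}=-R_\theta(t,x_2)e^{a_1x_2}\Big[(t+s)k_2(t+s)x_2+\frac{k_1(t+s)}{k_1(\tau+s)}(\tau+s)k_2(\tau+s)(x_1-x_2)\Big].$$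
   Context: Interval-monitored simple step-stress accelerated life test under a proportional hazards model with linear baseline hazard $h_0(t)=\gamma_0+\gamma_1t$ and stress effect $e^{a_1x}$, combined with the cumulative exposure model (the shift $s$ makes the cumulative hazard continuous at $\tau$, with $s<0$ and $\tau+s>0$). $N$ devices are tested; $n_j$ is the number failing in $(t_{j-1},t_j]$ for $j\le L$ and $n_{L+1}$ the number surviving past $t_L$. Stress is $x_1$ on $[0,\tau)$ and $x_2$ afterwards. *)

theory Defs
  imports "HOL-Analysis.Analysis"
begin

definition s_par :: "real \<Rightarrow> real \<Rightarrow> real \<Rightarrow> real \<Rightarrow> real \<Rightarrow> real \<Rightarrow> real" where
  "s_par x1 x2 tau g0 g1 a1 =
     (THE u. u > 0 \<and> g1 / 2 * u\<^sup>2 + g0 * u - exp (a1 * (x1 - x2)) * (g0 * tau + g1 * tau\<^sup>2 / 2) = 0) - tau"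

definition R1 :: "real \<Rightarrow> real \<Rightarrow> real \<Rightarrow> real \<Rightarrow> real \<Rightarrow> real" where
  "R1 x1 g0 g1 a1 t = exp (- exp (a1 * x1) * (g0 * t + g1 * t\<^sup>2 / 2))"

definition R2 :: "real \<Rightarrow> real \<Rightarrow> real \<Rightarrow> real \<Rightarrow> real \<Rightarrow> real \<Rightarrow> real \<Rightarrow> real" where
  "R2 x1 x2 tau g0 g1 a1 t =
     (let s = s_par x1 x2 tau g0 g1 a1
      in exp (- exp (a1 * x2) * (g0 * (t + s) + g1 * (t + s)\<^sup>2 / 2)))"

definition Rstep :: "real \<Rightarrow> real \<Rightarrow> real \<Rightarrow> real \<Rightarrow> real \<Rightarrow> real \<Rightarrow> real \<Rightarrow> real" where
  "Rstep x1 x2 tau g0 g1 a1 t =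
     (if t \<le> tau then R1 x1 g0 g1 a1 t else R2 x1 x2 tau g0 g1 a1 t)"

definition cellprob :: "real \<Rightarrow> real \<Rightarrow> real \<Rightarrow> (nat \<Rightarrow> real) \<Rightarrow> nat \<Rightarrow> real \<Rightarrow> real \<Rightarrow> real \<Rightarrow> nat \<Rightarrow> real" where
  "cellprob x1 x2 tau t L g0 g1 a1 j =
     (if j = L + 1 then Rstep x1 x2 tau g0 g1 a1 (t L)
      else Rstep x1 x2 tau g0 g1 a1 (t (j - 1)) - Rstep x1 x2 tau g0 g1 a1 (t j))"

definition dpd :: "real \<Rightarrow> nat \<Rightarrow> (nat \<Rightarrow> real) \<Rightarrow> (nat \<Rightarrow> real) \<Rightarrow> real" where
  "dpd beta L phat pr =
     (if beta = 0 then (\<Sum>j\<in>{1..L+1}. phat j * ln (phat j / pr j))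
      else (\<Sum>j\<in>{1..L+1}. pr j powr (beta + 1) - (1 + 1 / beta) * pr j powr beta * phat j
                            + 1 / beta * phat j powr (beta + 1)))"

definition k1 :: "real \<Rightarrow> real \<Rightarrow> real \<Rightarrow> real" where
  "k1 g0 g1 t = g1 * t + g0"

definition k2 :: "real \<Rightarrow> real \<Rightarrow> real \<Rightarrow> real" where
  "k2 g0 g1 t = g1 / 2 * t + g0"

definition dR1 :: "real \<Rightarrow> real \<Rightarrow> real \<Rightarrow> real \<Rightarrow> real \<Rightarrow> real ^ 3" where
  "dR1 x1 g0 g1 a1 t =
     (let R = R1 x1 g0 g1 a1 t; e = exp (a1 * x1) in
      vector [ - R * e * t, - R * e * (t\<^sup>2 / 2), - R * e * t * k2 g0 g1 t * x1 ])"

definition dR2 :: "real \<Rightarrow> real \<Rightarrow> real \<Rightarrow> real \<Rightarrow> real \<Rightarrow> real \<Rightarrow> real \<Rightarrow> real ^ 3" where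
  "dR2 x1 x2 tau g0 g1 a1 t =
     (let R = R2 x1 x2 tau g0 g1 a1 t; e = exp (a1 * x2); s = s_par x1 x2 tau g0 g1 a1;
          q = (tau + s) * s / k2 g0 g1 tau * (k1 g0 g1 (t + s) / k1 g0 g1 (tau + s)) in
      vector [ - R * e * ((t + s) + g1 / 2 * q),
               - R * e * ((t + s)\<^sup>2 / 2 - g0 / 2 * q),
               - R * e * ((t + s) * k2 g0 g1 (t + s) * x2
                          + k1 g0 g1 (t + s) / k1 g0 g1 (tau + s) * (tau + s) * k2 g0 g1 (tau + s) * (x1 - x2)) ])"

definition wrow :: "real \<Rightarrow> real \<Rightarrow> real \<Rightarrow> (nat \<Rightarrow> real) \<Rightarrow> nat \<Rightarrow> real \<Rightarrow> real \<Rightarrow> real \<Rightarrow> nat \<Rightarrow> real ^ 3" where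
  "wrow x1 x2 tau t L g0 g1 a1 j =
     (if j = L + 1 then dR2 x1 x2 tau g0 g1 a1 (t L)
      else if t (j - 1) < tau then dR1 x1 g0 g1 a1 (t (j - 1)) - dR1 x1 g0 g1 a1 (t j)
      else dR2 x1 x2 tau g0 g1 a1 (t (j - 1)) - dR2 x1 x2 tau g0 g1 a1 (t j))"

definition Ubeta :: "real \<Rightarrow> real \<Rightarrow> real \<Rightarrow> (nat \<Rightarrow> real) \<Rightarrow> nat \<Rightarrow> real \<Rightarrow> (nat \<Rightarrow> real) \<Rightarrow> real \<Rightarrow> real \<Rightarrow> real \<Rightarrow> real ^ 3" where
  "Ubeta x1 x2 tau t L beta phat g0 g1 a1 =
     (\<Sum>j\<in>{1..L+1}. (cellprob x1 x2 tau t L g0 g1 a1 j powr (beta - 1)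
                       * (phat j - cellprob x1 x2 tau t L g0 g1 a1 j))
                     *\<^sub>R wrow x1 x2 tau t L g0 g1 a1 j)"

end

theory Submission
  imports Defs
begin


definition Uf :: "real \<Rightarrow> real \<Rightarrow> real \<Rightarrow> real" where
  "Uf g0 g1 C = (- g0 + sqrt (g0\<^sup>2 + 2 * g1 * C)) / g1"

lemma Uf_root:
  assumes "g0 > 0" "g1 > 0" "C > 0"
  shows "Uf g0 g1 C > 0" "g1 / 2 * (Uf g0 g1 C)\<^sup>2 + g0 * Uf g0 g1 C = C"
proof -
  have q: "sqrt (g0\<^sup>2 + 2 * g1 * C) > sqrt (g0\<^sup>2)"
    using assms by (intro real_sqrt_less_mono) auto
  then show "Uf g0 g1 C > 0" using assms by (simp add: Uf_def)
  have sq: "(sqrt (g0\<^sup>2 + 2 * g1 * C))\<^sup>2 = g0\<^sup>2 + 2 * g1 * C"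
    using assms by (intro real_sqrt_pow2) (auto intro: add_nonneg_nonneg)
  show "g1 / 2 * (Uf g0 g1 C)\<^sup>2 + g0 * Uf g0 g1 C = C"
    using assms sq unfolding Uf_def by (simp add: field_simps power2_eq_square)
qed

lemma root_unique:
  fixes g0 g1 u w :: real
  assumes "g0 > 0" "g1 > 0" "u > 0" "w > 0"
   "g1 / 2 * u\<^sup>2 + g0 * u = g1 / 2 * w\<^sup>2 + g0 * w"
  shows "u = w"
proof -
  have "(u - w) * (g1 / 2 * (u + w) + g0) = 0"
    using assms(5) by (simp add: algebra_simps power2_eq_square) (simp add: field_simps)
  moreover have "g1 / 2 * (u + w) + g0 > 0" using assms by (simp add: add_pos_pos)
  ultimately show ?thesis by simp
qed

lemma s_par_eq:
  assumes "g0 > 0" "g1 > 0" "tau > 0"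
  shows "s_par x1 x2 tau g0 g1 a1 = Uf g0 g1 (exp (a1 * (x1 - x2)) * (g0 * tau + g1 * tau\<^sup>2 / 2)) - tau"
proof -
  let ?C = "exp (a1 * (x1 - x2)) * (g0 * tau + g1 * tau\<^sup>2 / 2)"
  have C: "?C > 0" using assms by (intro mult_pos_pos) (auto intro: add_pos_pos)
  have "(THE u. u > 0 \<and> g1 / 2 * u\<^sup>2 + g0 * u - ?C = 0) = Uf g0 g1 ?C"
  proof (rule the_equality)
    show "Uf g0 g1 ?C > 0 \<and> g1 / 2 * (Uf g0 g1 ?C)\<^sup>2 + g0 * Uf g0 g1 ?C - ?C = 0"
      using Uf_root[OF assms(1,2) C] by simp
    fix u assume "u > 0 \<and> g1 / 2 * u\<^sup>2 + g0 * u - ?C = 0"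
    then show "u = Uf g0 g1 ?C"
      using Uf_root[OF assms(1,2) C] root_unique[OF assms(1,2), of u "Uf g0 g1 ?C"] by auto
  qed
  then show ?thesis unfolding s_par_def by simp
qed

lemma inner_vec3: "inner (vector [a, b, c] :: real^3) v = a * v$1 + b * v$2 + c * v$3"
  by (simp add: inner_vec_def sum_3)

lemma dR1_deriv:
  "((\<lambda>h. R1 x1 (g0 + h * v$1) (g1 + h * v$2) (a1 + h * v$3) t) has_real_derivative
     inner (dR1 x1 g0 g1 a1 t) v) (at 0)"
  unfolding R1_def dR1_def Let_def inner_vec3 k2_def
  by (rule derivative_eq_intros refl | simp)+ (simp add: algebra_simps power2_eq_square)

lemma open_S: "open {h::real. 0 < g0 + h * c0 \<and> 0 < g1 + h * c1}"
  by (intro open_Collect_conj open_Collect_less) (auto intro!: continuous_intros)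

lemma U_deriv:
  fixes v :: "real^3" and x1 x2 a1 :: real
  assumes g0: "g0 > 0" and g1: "g1 > 0" and tau: "tau > 0"
  defines "C \<equiv> \<lambda>h. exp ((a1 + h * v$3) * (x1 - x2)) * ((g0 + h * v$1) * tau + (g1 + h * v$2) * tau\<^sup>2 / 2)"
  defines "U \<equiv> \<lambda>h. Uf (g0 + h * v$1) (g1 + h * v$2) (C h)"
  obtains D where "(U has_real_derivative D) (at 0)"
    "(g1 * U 0 + g0) * D = exp (a1 * (x1 - x2)) * ((x1 - x2) * v$3 * (g0 * tau + g1 * tau\<^sup>2 / 2) + (v$1 * tau + v$2 * tau\<^sup>2 / 2))
        - v$2 / 2 * (U 0)\<^sup>2 - v$1 * U 0"
proof -
  have C0: "C 0 > 0" using g0 g1 tau unfolding C_def by (auto intro!: mult_pos_pos add_pos_pos)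
  have "\<exists>Q'. ((\<lambda>h. (g0 + h * v$1)\<^sup>2 + 2 * (g1 + h * v$2) * C h) has_real_derivative Q') (at 0)"
    unfolding C_def apply (rule exI) apply (rule derivative_intros)+ by simp
  then obtain Q' where Q: "((\<lambda>h. (g0 + h * v$1)\<^sup>2 + 2 * (g1 + h * v$2) * C h) has_real_derivative Q') (at 0)"
    by blast
  have Q0: "(g0 + 0 * v$1)\<^sup>2 + 2 * (g1 + 0 * v$2) * C 0 > 0"
    using C0 g0 g1 by (simp add: add_pos_pos)
  have sq: "((\<lambda>h. sqrt ((g0 + h * v$1)\<^sup>2 + 2 * (g1 + h * v$2) * C h)) has_real_derivative
      inverse (sqrt ((g0 + 0 * v$1)\<^sup>2 + 2 * (g1 + 0 * v$2) * C 0)) / 2 * Q') (at 0)"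
    by (rule DERIV_chain2[OF DERIV_real_sqrt[OF Q0] Q])
  have G0d: "((\<lambda>h. g0 + h * v$1) has_real_derivative v$1) (at 0)"
    by (rule derivative_eq_intros refl | simp)+
  have G1d: "((\<lambda>h. g1 + h * v$2) has_real_derivative v$2) (at 0)"
    by (rule derivative_eq_intros refl | simp)+
  have "\<exists>D. (U has_real_derivative D) (at 0)"
    unfolding U_def Uf_def
    apply (rule exI)
    apply (rule DERIV_divide[OF DERIV_add[OF DERIV_minus[OF G0d] sq] G1d])
    using g1 by simp
  then obtain D where D: "(U has_real_derivative D) (at 0)" by blast
  let ?S = "{h::real. 0 < g0 + h * v$1 \<and> 0 < g1 + h * v$2}"
  have eq: "(g1 + h * v$2) / 2 * (U h)\<^sup>2 + (g0 + h * v$1) * U h = C h" if "h \<in> ?S" for h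
  proof -
    have "C h > 0" using that tau unfolding C_def by (auto intro!: mult_pos_pos add_pos_pos)
    then show ?thesis using that Uf_root(2)[of "g0 + h * v$1" "g1 + h * v$2" "C h"] unfolding U_def by auto
  qed
  have d1: "((\<lambda>h. (g1 + h * v$2) / 2 * (U h)\<^sup>2 + (g0 + h * v$1) * U h) has_real_derivative
       v$2 / 2 * (U 0)\<^sup>2 + g1 / 2 * (2 * U 0 * D) + (v$1 * U 0 + g0 * D)) (at 0)"
    by (rule derivative_eq_intros D refl | simp)+
  then have d1': "(C has_real_derivative v$2 / 2 * (U 0)\<^sup>2 + g1 / 2 * (2 * U 0 * D) + (v$1 * U 0 + g0 * D)) (at 0)"
    by (rule has_field_derivative_transform_within_open[OF _ open_S[of g0 "v$1" g1 "v$2"]]) (use g0 g1 eq in auto)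
  have d2: "(C has_real_derivative exp (a1 * (x1 - x2)) * ((x1 - x2) * v$3 * (g0 * tau + g1 * tau\<^sup>2 / 2) + (v$1 * tau + v$2 * tau\<^sup>2 / 2))) (at 0)"
    unfolding C_def
    by (rule derivative_eq_intros refl | simp)+ (simp add: algebra_simps)
  have "v$2 / 2 * (U 0)\<^sup>2 + g1 / 2 * (2 * U 0 * D) + (v$1 * U 0 + g0 * D) = exp (a1 * (x1 - x2)) * ((x1 - x2) * v$3 * (g0 * tau + g1 * tau\<^sup>2 / 2) + (v$1 * tau + v$2 * tau\<^sup>2 / 2))"
    using DERIV_unique[OF d1' d2] .
  then show ?thesis using D that by (simp add: algebra_simps)
qed

lemma dR2_deriv:
  fixes v :: "real^3"
  assumes g0: "g0 > 0" and g1: "g1 > 0" and tau: "tau > 0"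
  shows "((\<lambda>h. R2 x1 x2 tau (g0 + h * v$1) (g1 + h * v$2) (a1 + h * v$3) t) has_real_derivative
     inner (dR2 x1 x2 tau g0 g1 a1 t) v) (at 0)"
proof -
  define C where "C = (\<lambda>h. exp ((a1 + h * v$3) * (x1 - x2)) * ((g0 + h * v$1) * tau + (g1 + h * v$2) * tau\<^sup>2 / 2))"
  define U where "U = (\<lambda>h. Uf (g0 + h * v$1) (g1 + h * v$2) (C h))"
  obtain D where D: "(U has_real_derivative D) (at 0)"
    and key: "(g1 * U 0 + g0) * D = exp (a1 * (x1 - x2)) * ((x1 - x2) * v$3 * (g0 * tau + g1 * tau\<^sup>2 / 2) + (v$1 * tau + v$2 * tau\<^sup>2 / 2))
        - v$2 / 2 * (U 0)\<^sup>2 - v$1 * U 0"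
    using U_deriv[OF g0 g1 tau] unfolding C_def U_def by blast
  define u where "u = U 0"
  define E where "E = exp (a1 * (x1 - x2))"
  have C0: "C 0 > 0" using g0 g1 tau unfolding C_def by (auto intro!: mult_pos_pos add_pos_pos)
  have upos: "u > 0" and root: "g1 / 2 * u\<^sup>2 + g0 * u = E * (g0 * tau + g1 * tau\<^sup>2 / 2)"
    using Uf_root[OF g0 g1 C0] unfolding u_def U_def C_def E_def by auto
  have spar: "s_par x1 x2 tau g0 g1 a1 = u - tau"
    using s_par_eq[OF g0 g1 tau] unfolding u_def U_def C_def by simp
  have k2t: "g1 / 2 * tau + g0 > 0" using g0 g1 tau by (simp add: add_pos_pos)
  have k1u: "g1 * u + g0 > 0" using g0 g1 upos by (simp add: add_pos_pos)
  define K where "K = g1 / 2 * tau + g0"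
  have ETK: "E * tau * K = u * (g1 / 2 * u + g0)"
    using root unfolding K_def by (simp add: algebra_simps power2_eq_square)
  have P1: "E * ((x1 - x2) * v$3 * (g0 * tau + g1 * tau\<^sup>2 / 2)) = v$3 * u * (g1 / 2 * u + g0) * (x1 - x2)"
  proof -
    have EH: "E * (g0 * tau + g1 * tau\<^sup>2 / 2) = u * (g1 / 2 * u + g0)"
      using root by (simp add: algebra_simps power2_eq_square)
    have "E * ((x1 - x2) * v$3 * (g0 * tau + g1 * tau\<^sup>2 / 2)) = (E * (g0 * tau + g1 * tau\<^sup>2 / 2)) * ((x1 - x2) * v$3)"
      by (simp add: algebra_simps)
    also have "\<dots> = u * (g1 / 2 * u + g0) * ((x1 - x2) * v$3)" by (simp only: EH)
    finally show ?thesis by (simp add: field_simps)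
  qed
  have "(E * (v$1 * tau + v$2 * tau\<^sup>2 / 2) - v$2 / 2 * u\<^sup>2 - v$1 * u) * K
      = (E * tau * K) * (v$1 + v$2 * tau / 2) - (v$2 / 2 * u\<^sup>2 + v$1 * u) * K"
    by (simp add: algebra_simps power2_eq_square)
  also have "\<dots> = v$1 * g1 / 2 * u * (u - tau) - v$2 * g0 / 2 * u * (u - tau)"
    by (simp only: ETK) (simp add: K_def field_simps power2_eq_square)
  finally have P2a: "(E * (v$1 * tau + v$2 * tau\<^sup>2 / 2) - v$2 / 2 * u\<^sup>2 - v$1 * u) * K
      = v$1 * g1 / 2 * u * (u - tau) - v$2 * g0 / 2 * u * (u - tau)" .
  have Kpos: "K > 0" using k2t unfolding K_def .
  have P2: "E * (v$1 * tau + v$2 * tau\<^sup>2 / 2) - v$2 / 2 * u\<^sup>2 - v$1 * u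
      = v$1 * g1 / 2 * u * (u - tau) / K - v$2 * g0 / 2 * u * (u - tau) / K"
  proof -
    have "E * (v$1 * tau + v$2 * tau\<^sup>2 / 2) - v$2 / 2 * u\<^sup>2 - v$1 * u
       = ((E * (v$1 * tau + v$2 * tau\<^sup>2 / 2) - v$2 / 2 * u\<^sup>2 - v$1 * u) * K) / K"
      using Kpos by simp
    also have "\<dots> = (v$1 * g1 / 2 * u * (u - tau) - v$2 * g0 / 2 * u * (u - tau)) / K"
      by (simp only: P2a)
    finally show ?thesis by (simp add: diff_divide_distrib)
  qed
  have Dk: "(g1 * u + g0) * D = v$1 * g1 / 2 * u * (u - tau) / (g1 / 2 * tau + g0)
      - v$2 * g0 / 2 * u * (u - tau) / (g1 / 2 * tau + g0) + v$3 * u * (g1 / 2 * u + g0) * (x1 - x2)"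
  proof -
    have "(g1 * u + g0) * D = E * ((x1 - x2) * v$3 * (g0 * tau + g1 * tau\<^sup>2 / 2))
       + (E * (v$1 * tau + v$2 * tau\<^sup>2 / 2) - v$2 / 2 * u\<^sup>2 - v$1 * u)"
      using key[folded u_def E_def] by (simp add: algebra_simps)
    then show ?thesis unfolding P1 P2 K_def by simp
  qed
  then have Dv: "D = (v$1 * g1 / 2 * u * (u - tau) / (g1 / 2 * tau + g0)
      - v$2 * g0 / 2 * u * (u - tau) / (g1 / 2 * tau + g0) + v$3 * u * (g1 / 2 * u + g0) * (x1 - x2)) / (g1 * u + g0)"
    using k1u by (simp add: field_simps)
  let ?F = "\<lambda>h. exp (- exp ((a1 + h * v$3) * x2) * ((g0 + h * v$1) * (t + (U h - tau)) + (g1 + h * v$2) * (t + (U h - tau))\<^sup>2 / 2))"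
  have dF: "(?F has_real_derivative
     ?F 0 * (- (exp (a1 * x2) * (v$3 * x2) * (g0 * (t + (u - tau)) + g1 * (t + (u - tau))\<^sup>2 / 2)
        + exp (a1 * x2) * (v$1 * (t + (u - tau)) + g0 * D + (v$2 * (t + (u - tau))\<^sup>2 / 2 + g1 * (2 * (t + (u - tau)) * D) / 2))))) (at 0)"
    unfolding u_def
    by (rule derivative_eq_intros refl D | simp)+
  have eqS: "R2 x1 x2 tau (g0 + h * v$1) (g1 + h * v$2) (a1 + h * v$3) t = ?F h"
    if "h \<in> {h. 0 < g0 + h * v$1 \<and> 0 < g1 + h * v$2}" for h
    using that s_par_eq[of "g0 + h * v$1" "g1 + h * v$2" tau x1 x2 "a1 + h * v$3"] tau
    unfolding R2_def U_def C_def Let_def by simp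
  have F0: "?F 0 = R2 x1 x2 tau g0 g1 a1 t"
    unfolding R2_def Let_def spar u_def by simp
  have dF': "((\<lambda>h. R2 x1 x2 tau (g0 + h * v$1) (g1 + h * v$2) (a1 + h * v$3) t) has_real_derivative
     ?F 0 * (- (exp (a1 * x2) * (v$3 * x2) * (g0 * (t + (u - tau)) + g1 * (t + (u - tau))\<^sup>2 / 2)
        + exp (a1 * x2) * (v$1 * (t + (u - tau)) + g0 * D + (v$2 * (t + (u - tau))\<^sup>2 / 2 + g1 * (2 * (t + (u - tau)) * D) / 2))))) (at 0)"
    by (rule has_field_derivative_transform_within_open[OF dF open_S[of g0 "v$1" g1 "v$2"]])
       (use g0 g1 eqS in auto)
  have eqd: "inner (dR2 x1 x2 tau g0 g1 a1 t) v = R2 x1 x2 tau g0 g1 a1 t * (- (exp (a1 * x2) * (v$3 * x2) * (g0 * (t + (u - tau)) + g1 * (t + (u - tau))\<^sup>2 / 2)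
        + exp (a1 * x2) * (v$1 * (t + (u - tau)) + g0 * D + (v$2 * (t + (u - tau))\<^sup>2 / 2 + g1 * (2 * (t + (u - tau)) * D) / 2))))"
  proof -
    define w where "w = t + (u - tau)"
    define q where "q = (tau + (u - tau)) * (u - tau) / k2 g0 g1 tau * (k1 g0 g1 (t + (u - tau)) / k1 g0 g1 (tau + (u - tau)))"
    define r where "r = k1 g0 g1 (t + (u - tau)) / k1 g0 g1 (tau + (u - tau)) * (tau + (u - tau)) * k2 g0 g1 (tau + (u - tau)) * (x1 - x2)"
    have lhs: "inner (dR2 x1 x2 tau g0 g1 a1 t) v = - R2 x1 x2 tau g0 g1 a1 t * exp (a1 * x2) *
       ((w + g1 / 2 * q) * v$1 + (w\<^sup>2 / 2 - g0 / 2 * q) * v$2 + (w * k2 g0 g1 w * x2 + r) * v$3)"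
      unfolding dR2_def Let_def inner_vec3 spar
      unfolding q_def[symmetric] r_def[symmetric]
      unfolding w_def[symmetric]
      by (simp add: algebra_simps)
    have kD: "(g1 * w + g0) * D = v$1 * g1 / 2 * q - v$2 * g0 / 2 * q + v$3 * r"
    proof -
      define \<rho> where "\<rho> = (g1 * w + g0) / (g1 * u + g0)"
      have q': "q = (u * (u - tau) / K) * \<rho>"
        unfolding q_def \<rho>_def K_def k2_def k1_def w_def by simp
      have r': "r = \<rho> * (u * (g1 / 2 * u + g0) * (x1 - x2))"
        unfolding r_def \<rho>_def k2_def k1_def w_def by (simp add: mult.assoc)
      have Dk': "(g1 * u + g0) * D = v$1 * g1 / 2 * (u * (u - tau) / K) - v$2 * g0 / 2 * (u * (u - tau) / K)
          + v$3 * (u * (g1 / 2 * u + g0) * (x1 - x2))"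
        using Dk unfolding K_def by simp
      have "(g1 * w + g0) * D = \<rho> * ((g1 * u + g0) * D)"
        unfolding \<rho>_def using k1u by simp
      also have "\<dots> = v$1 * g1 / 2 * q - v$2 * g0 / 2 * q + v$3 * r"
        unfolding Dk' q' r' by (simp add: algebra_simps) (simp add: field_simps)
      finally show ?thesis .
    qed
    show "inner (dR2 x1 x2 tau g0 g1 a1 t) v = R2 x1 x2 tau g0 g1 a1 t * (- (exp (a1 * x2) * (v$3 * x2) * (g0 * (t + (u - tau)) + g1 * (t + (u - tau))\<^sup>2 / 2)
        + exp (a1 * x2) * (v$1 * (t + (u - tau)) + g0 * D + (v$2 * (t + (u - tau))\<^sup>2 / 2 + g1 * (2 * (t + (u - tau)) * D) / 2))))"
    proof -
      have "g0 * D + g1 * (2 * w * D) / 2 = v$1 * g1 / 2 * q - v$2 * g0 / 2 * q + v$3 * r"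
        using kD by (simp add: algebra_simps)
      note H = this
      have "R2 x1 x2 tau g0 g1 a1 t * (- (exp (a1 * x2) * (v$3 * x2) * (g0 * w + g1 * w\<^sup>2 / 2)
        + exp (a1 * x2) * (v$1 * w + g0 * D + (v$2 * w\<^sup>2 / 2 + g1 * (2 * w * D) / 2))))
        = - R2 x1 x2 tau g0 g1 a1 t * exp (a1 * x2) * (v$3 * x2 * (g0 * w + g1 * w\<^sup>2 / 2) + v$1 * w + v$2 * w\<^sup>2 / 2
           + (g0 * D + g1 * (2 * w * D) / 2))"
        by (simp add: algebra_simps)
      also have "\<dots> = - R2 x1 x2 tau g0 g1 a1 t * exp (a1 * x2) * (v$3 * x2 * (g0 * w + g1 * w\<^sup>2 / 2) + v$1 * w + v$2 * w\<^sup>2 / 2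
           + (v$1 * g1 / 2 * q - v$2 * g0 / 2 * q + v$3 * r))"
        by (simp only: H)
      also have "\<dots> = inner (dR2 x1 x2 tau g0 g1 a1 t) v"
        unfolding lhs k2_def by (simp add: algebra_simps power2_eq_square)
      finally show ?thesis unfolding w_def by simp
    qed
  qed
  show ?thesis using dF' unfolding F0 eqd .
qed

lemma spar_props:
  assumes "g0 > 0" "g1 > 0" "tau > 0"
  shows "tau + s_par x1 x2 tau g0 g1 a1 > 0"
    "g1 / 2 * (tau + s_par x1 x2 tau g0 g1 a1)\<^sup>2 + g0 * (tau + s_par x1 x2 tau g0 g1 a1)
      = exp (a1 * (x1 - x2)) * (g0 * tau + g1 * tau\<^sup>2 / 2)"
proof -
  let ?C = "exp (a1 * (x1 - x2)) * (g0 * tau + g1 * tau\<^sup>2 / 2)"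
  have C: "?C > 0" using assms by (intro mult_pos_pos) (auto intro: add_pos_pos)
  show "tau + s_par x1 x2 tau g0 g1 a1 > 0"
       "g1 / 2 * (tau + s_par x1 x2 tau g0 g1 a1)\<^sup>2 + g0 * (tau + s_par x1 x2 tau g0 g1 a1) = ?C"
    using Uf_root[OF assms(1,2) C] s_par_eq[OF assms, of x1 x2 a1] by simp_all
qed

lemma R2_tau:
  assumes "g0 > 0" "g1 > 0" "tau > 0"
  shows "R2 x1 x2 tau g0 g1 a1 tau = R1 x1 g0 g1 a1 tau"
proof -
  let ?u = "tau + s_par x1 x2 tau g0 g1 a1"
  have r: "g0 * ?u + g1 * ?u\<^sup>2 / 2 = exp (a1 * (x1 - x2)) * (g0 * tau + g1 * tau\<^sup>2 / 2)"
    using spar_props(2)[OF assms, of x1 x2 a1] by (simp add: algebra_simps)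
  have e: "exp (a1 * x2) * exp (a1 * (x1 - x2)) = exp (a1 * x1)"
    by (simp add: exp_add[symmetric] algebra_simps)
  have "exp (a1 * x2) * (g0 * ?u + g1 * ?u\<^sup>2 / 2) = exp (a1 * x1) * (g0 * tau + g1 * tau\<^sup>2 / 2)"
    unfolding r by (simp add: e mult.assoc[symmetric])
  then show ?thesis unfolding R2_def R1_def Let_def by simp
qed

lemma H_mono:
  fixes a b g0 g1 :: real
  assumes "g0 > 0" "g1 > 0" "0 \<le> a" "a < b"
  shows "g0 * a + g1 * a\<^sup>2 / 2 < g0 * b + g1 * b\<^sup>2 / 2"
proof -
  have "a\<^sup>2 < b\<^sup>2" using assms by (intro power_strict_mono) auto
  then have "g1 * a\<^sup>2 / 2 < g1 * b\<^sup>2 / 2" using assms by simp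
  moreover have "g0 * a < g0 * b" using assms by simp
  ultimately show ?thesis by simp
qed

lemma R1_mono:
  assumes "g0 > 0" "g1 > 0" "0 \<le> a" "a < b"
  shows "R1 x1 g0 g1 a1 b < R1 x1 g0 g1 a1 a"
  unfolding R1_def using H_mono[OF assms] by simp

lemma R2_mono:
  assumes "g0 > 0" "g1 > 0" "tau > 0" "tau \<le> a" "a < b"
  shows "R2 x1 x2 tau g0 g1 a1 b < R2 x1 x2 tau g0 g1 a1 a"
proof -
  have "0 \<le> a + s_par x1 x2 tau g0 g1 a1" using spar_props(1)[OF assms(1-3), of x1 x2 a1] assms by simp
  from H_mono[OF assms(1,2) this, of "b + s_par x1 x2 tau g0 g1 a1"] assms(5)
  show ?thesis unfolding R2_def Let_def by simp
qed

lemma Rstep_mono: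
  assumes "g0 > 0" "g1 > 0" "tau > 0" "0 \<le> a" "a < b"
  shows "Rstep x1 x2 tau g0 g1 a1 b < Rstep x1 x2 tau g0 g1 a1 a"
proof (cases "b \<le> tau")
  case True
  then show ?thesis using R1_mono[OF assms(1,2,4,5)] assms unfolding Rstep_def by simp
next
  case b: False
  show ?thesis
  proof (cases "a \<le> tau")
    case True
    have "R1 x1 g0 g1 a1 tau \<le> R1 x1 g0 g1 a1 a"
      using R1_mono[OF assms(1,2,4), of tau x1 a1] True by (cases "a = tau") auto
    moreover have "R2 x1 x2 tau g0 g1 a1 b < R2 x1 x2 tau g0 g1 a1 tau"
      using R2_mono[OF assms(1-3), of tau b] b by simp
    ultimately show ?thesis using True b R2_tau[OF assms(1-3)] unfolding Rstep_def by simp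
  next
    case False
    then show ?thesis using b R2_mono[OF assms(1-3), of a b] assms unfolding Rstep_def by simp
  qed
qed

lemma dRstep1:
  assumes "t \<le> tau"
  shows "((\<lambda>h. Rstep x1 x2 tau (g0 + h * v$1) (g1 + h * v$2) (a1 + h * v$3) t) has_real_derivative
     inner (dR1 x1 g0 g1 a1 t) v) (at 0)"
  using dR1_deriv assms unfolding Rstep_def by simp

lemma dRstep2:
  assumes "g0 > 0" "g1 > 0" "tau > 0" "tau \<le> t"
  shows "((\<lambda>h. Rstep x1 x2 tau (g0 + h * v$1) (g1 + h * v$2) (a1 + h * v$3) t) has_real_derivative
     inner (dR2 x1 x2 tau g0 g1 a1 t) v) (at 0)"
proof (rule has_field_derivative_transform_within_open[OF dR2_deriv[OF assms(1-3)] open_S[of g0 "v$1" g1 "v$2"]])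
  fix h assume "h \<in> {h. 0 < g0 + h * v$1 \<and> 0 < g1 + h * v$2}"
  then show "R2 x1 x2 tau (g0 + h * v$1) (g1 + h * v$2) (a1 + h * v$3) t = Rstep x1 x2 tau (g0 + h * v$1) (g1 + h * v$2) (a1 + h * v$3) t"
    using R2_tau[of "g0 + h * v$1" "g1 + h * v$2" tau x1 x2 "a1 + h * v$3"] assms
    unfolding Rstep_def by (cases "t = tau") auto
qed (use assms in auto)

lemma t_strict:
  assumes "\<And>j. j < L \<Longrightarrow> t j < t (Suc j)"
  shows "i < j \<Longrightarrow> j \<le> L \<Longrightarrow> (t i :: real) < t j"
proof (induction j)
  case 0 then show ?case by simp
next
  case (Suc j)
  have "t j < t (Suc j)" using Suc.prems assms by simp
  moreover have "t i \<le> t j" using Suc by (cases "i = j") (auto simp: less_Suc_eq)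
  ultimately show ?case by simp
qed

lemma tele: fixes L :: nat and f :: "nat \<Rightarrow> real" shows "(\<Sum>j\<in>{1..L}. f (j - 1) - f j) = f 0 - f L"
  by (induction L) (auto simp: atLeastAtMostSuc_conv)

lemma cellprob_sum:
  assumes "t 0 = 0" "tau \<ge> 0"
  shows "(\<Sum>j\<in>{1..L+1}. cellprob x1 x2 tau t L g0 g1 a1 j) = 1"
proof -
  have "(\<Sum>j\<in>{1..L+1}. cellprob x1 x2 tau t L g0 g1 a1 j)
      = (\<Sum>j\<in>{1..L}. cellprob x1 x2 tau t L g0 g1 a1 j) + cellprob x1 x2 tau t L g0 g1 a1 (L + 1)"
    by (simp add: atLeastAtMostSuc_conv)
  also have "(\<Sum>j\<in>{1..L}. cellprob x1 x2 tau t L g0 g1 a1 j)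
      = (\<Sum>j\<in>{1..L}. Rstep x1 x2 tau g0 g1 a1 (t (j - 1)) - Rstep x1 x2 tau g0 g1 a1 (t j))"
    by (rule sum.cong) (auto simp: cellprob_def)
  also have "\<dots> = Rstep x1 x2 tau g0 g1 a1 (t 0) - Rstep x1 x2 tau g0 g1 a1 (t L)"
    by (rule tele)
  finally show ?thesis using assms by (simp add: cellprob_def Rstep_def R1_def)
qed


lemma cellprob_facts:
  fixes v :: "real^3"
  assumes tau: "tau > 0" and g0: "g0 > 0" and g1: "g1 > 0" and t0: "t 0 = 0"
    and ts: "\<And>j. j < L \<Longrightarrow> t j < t (Suc j)"
    and k: "1 \<le> k" "k < L" "t k = tau"
    and j: "j \<in> {1..L+1}"
  shows "cellprob x1 x2 tau t L g0 g1 a1 j > 0"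
    "((\<lambda>h. cellprob x1 x2 tau t L (g0 + h * v$1) (g1 + h * v$2) (a1 + h * v$3) j) has_real_derivative
       inner (wrow x1 x2 tau t L g0 g1 a1 j) v) (at 0)"
proof -
  note tsr = t_strict[where L=L and t=t, OF ts]
  have tpos: "t i \<ge> 0" if "i \<le> L" for i
    using tsr[of 0 i] that t0 by (cases "i = 0") auto
  have tL: "t L > tau" using tsr[of k L] k by simp
  have "cellprob x1 x2 tau t L g0 g1 a1 j > 0 \<and>
    ((\<lambda>h. cellprob x1 x2 tau t L (g0 + h * v$1) (g1 + h * v$2) (a1 + h * v$3) j) has_real_derivative
       inner (wrow x1 x2 tau t L g0 g1 a1 j) v) (at 0)"
  proof (cases "j = L + 1")
    case True
    then show ?thesis
      using dRstep2[OF g0 g1 tau, of "t L" x1 x2 v a1] tL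
      unfolding cellprob_def wrow_def Rstep_def R2_def R1_def Let_def by simp
  next
    case False
    then have jL: "1 \<le> j" "j \<le> L" using j by auto
    have lt: "t (j - 1) < t j" using tsr[of "j - 1" j] jL by simp
    have pos: "cellprob x1 x2 tau t L g0 g1 a1 j > 0"
      using Rstep_mono[OF g0 g1 tau tpos[of "j - 1"] lt, of x1 x2 a1] False jL
      unfolding cellprob_def by simp
    show ?thesis
    proof (cases "t (j - 1) < tau")
      case True
      have "j - 1 < k"
      proof (rule ccontr)
        assume "\<not> j - 1 < k"
        moreover have "j - 1 \<le> L" using jL by simp
        ultimately have "t k \<le> t (j - 1)" using tsr[of k "j - 1"] by (cases "k = j - 1") auto
        then show False using True k by simp
      qed
      then have "j \<le> k" using jL by simp
      then have "t j \<le> tau" using tsr[of j k] k by (cases "j = k") auto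
      then show ?thesis
        using pos False True DERIV_diff[OF dRstep1[of "t (j - 1)" tau x1 x2 g0 v g1 a1] dRstep1[of "t j" tau x1 x2 g0 v g1 a1]]
        unfolding cellprob_def wrow_def by (simp add: inner_diff_left)
    next
      case c: False
      then have "tau \<le> t j" using lt by simp
      then show ?thesis
        using pos False c DERIV_diff[OF dRstep2[OF g0 g1 tau, of "t (j - 1)" x1 x2 v a1] dRstep2[OF g0 g1 tau, of "t j" x1 x2 v a1]]
        unfolding cellprob_def wrow_def by (simp add: inner_diff_left)
    qed
  qed
  then show "cellprob x1 x2 tau t L g0 g1 a1 j > 0"
    "((\<lambda>h. cellprob x1 x2 tau t L (g0 + h * v$1) (g1 + h * v$2) (a1 + h * v$3) j) has_real_derivative
       inner (wrow x1 x2 tau t L g0 g1 a1 j) v) (at 0)" by auto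
qed

lemma dpd_deriv:
  fixes v :: "real^3" and P :: "real \<Rightarrow> nat \<Rightarrow> real" and p pr m :: "nat \<Rightarrow> real"
  assumes beta: "beta \<ge> 0"
    and p: "\<And>j. p j \<ge> 0"
    and pos: "\<And>j. j \<in> {1..L+1} \<Longrightarrow> pr j > 0"
    and P0: "\<And>j. P 0 j = pr j"
    and dP: "\<And>j. j \<in> {1..L+1} \<Longrightarrow> ((\<lambda>h. P h j) has_real_derivative m j) (at 0)"
    and msum: "(\<Sum>j\<in>{1..L+1}. m j) = 0"
  shows "((\<lambda>h. dpd beta L p (P h)) has_real_derivative
     - (if beta = 0 then 1 else beta + 1) * (\<Sum>j\<in>{1..L+1}. (pr j powr (beta - 1) * (p j - pr j)) * m j)) (at 0)"
proof (cases "beta = 0")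
  case True
  have dj: "((\<lambda>h. p j * ln (p j / P h j)) has_real_derivative - (p j * m j / pr j)) (at 0)"
    if j: "j \<in> {1..L+1}" for j
  proof (cases "p j = 0")
    case True
    then show ?thesis by simp
  next
    case False
    then have pj: "p j > 0" using p[of j] by simp
    have q: "p j / P 0 j > 0" using pj pos[OF j] P0 by simp
    have "((\<lambda>h. p j * ln (p j / P h j)) has_real_derivative
        p j * (1 / (p j / P 0 j) * ((0 * P 0 j - p j * m j) / (P 0 j * P 0 j)))) (at 0)"
      by (rule DERIV_cmult[OF DERIV_chain2[OF DERIV_ln_divide[OF q] DERIV_divide[OF DERIV_const dP[OF j]]]])
         (use pos[OF j] P0 in simp)
    moreover have "p j * (1 / (p j / P 0 j) * ((0 * P 0 j - p j * m j) / (P 0 j * P 0 j))) = - (p j * m j / pr j)"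
      using pj pos[OF j] P0[of j] by (simp add: field_simps)
    ultimately show ?thesis by simp
  qed
  have "((\<lambda>h. \<Sum>j\<in>{1..L+1}. p j * ln (p j / P h j)) has_real_derivative (\<Sum>j\<in>{1..L+1}. - (p j * m j / pr j))) (at 0)"
    by (rule DERIV_sum) (rule dj)
  moreover have "(\<Sum>j\<in>{1..L+1}. - (p j * m j / pr j)) = - (\<Sum>j\<in>{1..L+1}. (pr j powr (beta - 1) * (p j - pr j)) * m j)"
  proof -
    have "(\<Sum>j\<in>{1..L+1}. (pr j powr (beta - 1) * (p j - pr j)) * m j) = (\<Sum>j\<in>{1..L+1}. p j * m j / pr j - m j)"
    proof (rule sum.cong)
      fix j assume j: "j \<in> {1..L+1}"
      have "pr j powr (beta - 1) = 1 / pr j" using True pos[OF j] by (simp add: powr_minus divide_inverse)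
      then show "(pr j powr (beta - 1) * (p j - pr j)) * m j = p j * m j / pr j - m j"
        using pos[OF j] by (simp add: field_simps)
    qed simp
    also have "\<dots> = (\<Sum>j\<in>{1..L+1}. p j * m j / pr j)" using msum by (simp add: sum_subtractf)
    finally show ?thesis by (simp add: sum_negf)
  qed
  ultimately show ?thesis using True unfolding dpd_def by simp
next
  case False
  then have bpos: "beta > 0" using beta by simp
  have dj: "((\<lambda>h. P h j powr (beta + 1) - (1 + 1 / beta) * P h j powr beta * p j + 1 / beta * p j powr (beta + 1))
      has_real_derivative - (beta + 1) * ((pr j powr (beta - 1) * (p j - pr j)) * m j)) (at 0)"
    if j: "j \<in> {1..L+1}" for j
  proof -
    have pp: "P 0 j > 0" using pos[OF j] P0 by simp
    have "((\<lambda>h. P h j powr (beta + 1) - (1 + 1 / beta) * P h j powr beta * p j + 1 / beta * p j powr (beta + 1))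
      has_real_derivative ((beta + 1) * P 0 j powr (beta + 1 - of_nat 1) * m j
         - ((1 + 1 / beta) * (beta * P 0 j powr (beta - of_nat 1) * m j)) * p j + 0)) (at 0)"
      by (intro DERIV_add DERIV_diff DERIV_cmult_right DERIV_cmult DERIV_fun_powr dP[OF j] pp DERIV_const)
    moreover have "(beta + 1) * P 0 j powr (beta + 1 - of_nat 1) * m j
         - ((1 + 1 / beta) * (beta * P 0 j powr (beta - of_nat 1) * m j)) * p j + 0
        = - (beta + 1) * ((pr j powr (beta - 1) * (p j - pr j)) * m j)"
    proof -
      have e1: "pr j powr beta = pr j powr (beta - 1) * pr j"
      proof -
        have "pr j powr (beta - 1) * pr j = pr j powr (beta - 1) * pr j powr 1" using pos[OF j] by simp
        also have "\<dots> = pr j powr (beta - 1 + 1)" by (rule powr_add[symmetric])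
        finally show ?thesis by simp
      qed
      define a where "a = pr j powr (beta - 1)"
      have e2: "(1 + 1 / beta) * (beta * a * m j) * p j = (beta + 1) * a * m j * p j"
        using bpos by (simp add: field_simps)
      have "(beta + 1) * P 0 j powr (beta + 1 - of_nat 1) * m j
         - ((1 + 1 / beta) * (beta * P 0 j powr (beta - of_nat 1) * m j)) * p j + 0
         = (beta + 1) * (a * pr j) * m j - (1 + 1 / beta) * (beta * a * m j) * p j"
        unfolding P0 a_def by (simp add: e1)
      also have "\<dots> = - (beta + 1) * ((a * (p j - pr j)) * m j)"
        unfolding e2 by (simp add: algebra_simps)
      finally show ?thesis unfolding a_def .
    qed
    ultimately show ?thesis by simp
  qed
  have "((\<lambda>h. \<Sum>j\<in>{1..L+1}. P h j powr (beta + 1) - (1 + 1 / beta) * P h j powr beta * p j + 1 / beta * p j powr (beta + 1))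
     has_real_derivative (\<Sum>j\<in>{1..L+1}. - (beta + 1) * ((pr j powr (beta - 1) * (p j - pr j)) * m j))) (at 0)"
    by (rule DERIV_sum) (rule dj)
  then show ?thesis using False unfolding dpd_def by (simp add: sum_distrib_left[symmetric])
qed


theorem theorem1:
  fixes x1 x2 tau beta :: real and t :: "nat \<Rightarrow> real" and L k N :: nat
    and n :: "nat \<Rightarrow> nat" and g0 g1 a1 :: real
  assumes "x1 < x2" and "tau > 0"
    and "t 0 = 0" and "\<And>j. j < L \<Longrightarrow> t j < t (Suc j)"
    and "1 \<le> k" and "k < L" and "t k = tau"
    and "N = (\<Sum>j\<in>{1..L+1}. n j)" and "N > 0"
    and "beta \<ge> 0"
    and "g0 > 0" and "g1 > 0" and "a1 > 0"
    and "\<And>h0 h1 b1. h0 > 0 \<Longrightarrow> h1 > 0 \<Longrightarrow> b1 > 0 \<Longrightarrow>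
           dpd beta L (\<lambda>j. real (n j) / real N) (cellprob x1 x2 tau t L g0 g1 a1)
             \<le> dpd beta L (\<lambda>j. real (n j) / real N) (cellprob x1 x2 tau t L h0 h1 b1)"
  shows "Ubeta x1 x2 tau t L beta (\<lambda>j. real (n j) / real N) g0 g1 a1 = 0"
proof -
  note tau = assms(2) and t0 = assms(3) and ts = assms(4) and k = assms(5-7)
    and beta = assms(10) and g0 = assms(11) and g1 = assms(12) and a1 = assms(13) and mn = assms(14)
  define p where "p = (\<lambda>j. real (n j) / real N)"
  define U where "U = Ubeta x1 x2 tau t L beta p g0 g1 a1"
  define v where "v = U"
  define pr where "pr = cellprob x1 x2 tau t L g0 g1 a1"
  define P where "P = (\<lambda>h. cellprob x1 x2 tau t L (g0 + h * v$1) (g1 + h * v$2) (a1 + h * v$3))"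
  define m where "m = (\<lambda>j. inner (wrow x1 x2 tau t L g0 g1 a1 j) v)"
  have dP: "((\<lambda>h. P h j) has_real_derivative m j) (at 0)" if "j \<in> {1..L+1}" for j
    unfolding P_def m_def by (rule cellprob_facts(2)[OF tau g0 g1 t0 ts k that])
  have pos: "pr j > 0" if "j \<in> {1..L+1}" for j
    unfolding pr_def by (rule cellprob_facts(1)[OF tau g0 g1 t0 ts k that])
  have P0: "P 0 j = pr j" for j unfolding P_def pr_def by simp
  have msum: "(\<Sum>j\<in>{1..L+1}. m j) = 0"
  proof -
    have "((\<lambda>h. \<Sum>j\<in>{1..L+1}. P h j) has_real_derivative (\<Sum>j\<in>{1..L+1}. m j)) (at 0)"
      by (rule DERIV_sum) (rule dP)
    moreover have "(\<lambda>h. \<Sum>j\<in>{1..L+1}. P h j) = (\<lambda>h. 1)"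
      unfolding P_def using cellprob_sum[where t=t, OF t0] tau by auto
    ultimately show ?thesis using DERIV_unique DERIV_const by metis
  qed
  have p: "p j \<ge> 0" for j unfolding p_def by simp
  define c where "c = (if beta = 0 then 1 else beta + 1 :: real)"
  have cpos: "c > 0" using beta unfolding c_def by auto
  have Uin: "inner U v = (\<Sum>j\<in>{1..L+1}. (pr j powr (beta - 1) * (p j - pr j)) * m j)"
    unfolding U_def Ubeta_def pr_def m_def
    by (simp only: inner_sum_left inner_scaleR_left)
  have der: "((\<lambda>h. dpd beta L p (P h)) has_real_derivative - c * inner U v) (at 0)"
    unfolding Uin c_def by (rule dpd_deriv[OF beta p pos P0 dP msum])
  define d where "d = min g0 (min g1 a1) / (\<bar>v$1\<bar> + \<bar>v$2\<bar> + \<bar>v$3\<bar> + 1)"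
  have Spos: "\<bar>v$1\<bar> + \<bar>v$2\<bar> + \<bar>v$3\<bar> + 1 > 0" by (simp add: add_nonneg_pos)
  have dpos: "d > 0" unfolding d_def using g0 g1 a1 Spos by simp
  have small: "\<bar>y * v$i\<bar> < min g0 (min g1 a1)" if "\<bar>y\<bar> < d" "i \<in> {1, 2, 3}" for y i
  proof -
    have vi: "\<bar>v$i\<bar> \<le> \<bar>v$1\<bar> + \<bar>v$2\<bar> + \<bar>v$3\<bar> + 1" using that(2) by auto
    have "\<bar>y * v$i\<bar> = \<bar>y\<bar> * \<bar>v$i\<bar>" by (simp add: abs_mult)
    also have "\<dots> \<le> \<bar>y\<bar> * (\<bar>v$1\<bar> + \<bar>v$2\<bar> + \<bar>v$3\<bar> + 1)" by (rule mult_left_mono[OF vi]) simp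
    also have "\<dots> < d * (\<bar>v$1\<bar> + \<bar>v$2\<bar> + \<bar>v$3\<bar> + 1)" by (rule mult_strict_right_mono[OF that(1) Spos])
    also have "\<dots> = min g0 (min g1 a1)" unfolding d_def using Spos by simp
    finally show ?thesis .
  qed
  have "- c * inner U v = 0"
  proof (rule DERIV_local_min[OF der dpos], intro allI impI)
    fix y :: real assume "\<bar>0 - y\<bar> < d"
    then have y: "\<bar>y\<bar> < d" by simp
    have "0 < g0 + y * v$1" using small[OF y, of 1] by (simp add: abs_less_iff)
    moreover have "0 < g1 + y * v$2" using small[OF y, of 2] by (simp add: abs_less_iff)
    moreover have "0 < a1 + y * v$3" using small[OF y, of 3] by (simp add: abs_less_iff)
    ultimately show "dpd beta L p (P 0) \<le> dpd beta L p (P y)"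
      using mn unfolding P_def p_def by simp
  qed
  then have "inner U U = 0" using cpos unfolding v_def by simp
  then show ?thesis unfolding U_def p_def by simp
qed

end
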